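(* Let $K\ge 2$, let $\mathcal{D}$ be a probability distribution on $\mathcal{X}\times\mathcal{Y}$ with $\mathcal{Y}=\{1,\dots,K\}$, and let $\rho$ be a probability distribution over classifiers $h:\mathcal{X}\to\mathcal{Y}$. Let $W_\rho(X,Y)=\mathbb{E}_{h\sim\rho}[\mathbb{1}(h(X)\neq Y)]$ for $(X,Y)\sim\mathcal{D}$. Suppose $\rho$ is competent, i.e. for every $0\le t\le 1/2$, $$\mathbb{P}_{\mathcal{D}}\big(W_\rho\in[t,1/2)\big)\;\ge\;\mathbb{P}_{\mathcal{D}}\big(W_\rho\in[1/2,1-t]\big).$$ Then $$L(h_{\mathrm{MV}})\le\min\left\{\frac{4(K-1)}{K}\Big(\mathbb{E}_{h\sim\rho}[L(h)]-\tfrac12\mathbb{E}_{h,h'\sim\rho}[D(h,h')]\Big),\;\mathbb{E}_{h\sim\rho}[L(h)]\right\}$$ and $$L(h_{\mathrm{MV}})\ge \mathbb{E}_{h\sim\rho}[L(h)]-\mathbb{E}_{h,h'\sim\rho}[D(h,h')].$$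
   Context: The error rate of a classifier is $L(h)=\mathbb{E}_{(X,Y)\sim\mathcal{D}}[\mathbb{1}(h(X)\neq Y)]$. The majority vote classifier is $h_{\mathrm{MV}}(x)=\arg\max_j \mathbb{E}_{h\sim\rho}[\mathbb{1}(h(x)=j)]$ (ties broken arbitrarily). The disagreement rate is $D(h,h')=\mathbb{E}_{X\sim\mathcal{D}}[\mathbb{1}(h(X)\neq h'(X))]$, and in $\mathbb{E}_{h,h'\sim\rho}[D(h,h')]$ the classifiers $h,h'$ are drawn independently from $\rho$. *)

theory Defs
  imports "HOL-Probability.Probability"
begin

text \<open>Labels are natural numbers in {1..K}. D is a probability measure on 'x \<times> nat,
  rho a probability measure on classifiers 'x \<Rightarrow> nat.\<close>

definition err :: "('x \<times> nat) measure \<Rightarrow> ('x \<Rightarrow> nat) \<Rightarrow> real" where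
  "err D h = measure D {z \<in> space D. h (fst z) \<noteq> snd z}"

definition disagree :: "('x \<times> nat) measure \<Rightarrow> ('x \<Rightarrow> nat) \<Rightarrow> ('x \<Rightarrow> nat) \<Rightarrow> real" where
  "disagree D h h' = measure D {z \<in> space D. h (fst z) \<noteq> h' (fst z)}"

definition W_rho :: "('x \<Rightarrow> nat) measure \<Rightarrow> 'x \<times> nat \<Rightarrow> real" where
  "W_rho \<rho> z = measure \<rho> {h \<in> space \<rho>. h (fst z) \<noteq> snd z}"

definition competent :: "('x \<times> nat) measure \<Rightarrow> ('x \<Rightarrow> nat) measure \<Rightarrow> bool" where
  "competent D \<rho> \<longleftrightarrow>
     (\<forall>t::real. 0 \<le> t \<and> t \<le> 1/2 \<longrightarrow>
        measure D {z \<in> space D. W_rho \<rho> z \<in> {t..<1/2}}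
        \<ge> measure D {z \<in> space D. W_rho \<rho> z \<in> {1/2..1-t}})"

definition is_majority_vote :: "nat \<Rightarrow> ('x \<Rightarrow> nat) measure \<Rightarrow> ('x \<Rightarrow> nat) \<Rightarrow> bool" where
  "is_majority_vote K \<rho> hmv \<longleftrightarrow>
     (\<forall>x. hmv x \<in> {1..K} \<and>
        (\<forall>j\<in>{1..K}. measure \<rho> {h \<in> space \<rho>. h x = j} \<le> measure \<rho> {h \<in> space \<rho>. h x = hmv x}))"

end

theory Submission
  imports Defs
begin


lemma layer:
  assumes M: "sigma_finite_measure M" and Z[measurable]: "Z \<in> borel_measurable M"
    and nn: "\<And>x. x \<in> space M \<Longrightarrow> 0 \<le> Z x"
  shows "(\<integral>\<^sup>+x. ennreal (Z x) \<partial>M) = (\<integral>\<^sup>+t. emeasure M {x\<in>space M. 0 \<le> t \<and> t \<le> Z x} \<partial>lborel)"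
proof -
  interpret pair_sigma_finite M lborel using M
    by (simp add: lborel.sigma_finite_measure_axioms pair_sigma_finite_def)
  have "(\<integral>\<^sup>+x. ennreal (Z x) \<partial>M) = (\<integral>\<^sup>+x. (\<integral>\<^sup>+t. indicator {0..Z x} t \<partial>lborel) \<partial>M)"
    by (intro nn_integral_cong) (simp add: nn)
  also have "\<dots> = (\<integral>\<^sup>+t. (\<integral>\<^sup>+x. indicator {0..Z x} t \<partial>M) \<partial>lborel)"
  proof (rule Fubini'[symmetric])
    have "(\<lambda>(x, t). indicator {0..Z x} t :: ennreal) = (\<lambda>p. if 0 \<le> snd p \<and> snd p \<le> Z (fst p) then 1 else 0)"
      by (auto simp: indicator_def fun_eq_iff)
    then show "(\<lambda>(x, t). indicator {0..Z x} t :: ennreal) \<in> borel_measurable (M \<Otimes>\<^sub>M lborel)"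
      by simp
  qed
  also have "\<dots> = (\<integral>\<^sup>+t. emeasure M {x\<in>space M. 0 \<le> t \<and> t \<le> Z x} \<partial>lborel)"
  proof (intro nn_integral_cong)
    fix t :: real
    have "(\<integral>\<^sup>+x. indicator {0..Z x} t \<partial>M) = (\<integral>\<^sup>+x. indicator {x\<in>space M. 0 \<le> t \<and> t \<le> Z x} x \<partial>M)"
      by (intro nn_integral_cong) (auto simp: indicator_def)
    also have "\<dots> = emeasure M {x\<in>space M. 0 \<le> t \<and> t \<le> Z x}"
      by (intro nn_integral_indicator) measurable
    finally show "(\<integral>\<^sup>+x. indicator {0..Z x} t \<partial>M) = emeasure M {x\<in>space M. 0 \<le> t \<and> t \<le> Z x}" .
  qed
  finally show ?thesis .
qed

lemma dominance:
  fixes X Y :: "'a \<Rightarrow> real"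
  assumes P: "prob_space M" and X[measurable]: "X \<in> borel_measurable M" and Y[measurable]: "Y \<in> borel_measurable M"
    and Xb: "\<And>x. x \<in> space M \<Longrightarrow> 0 \<le> X x \<and> X x \<le> 1"
    and Yb: "\<And>x. x \<in> space M \<Longrightarrow> 0 \<le> Y x \<and> Y x \<le> 1"
    and dom: "\<And>t. 0 \<le> t \<Longrightarrow> measure M {x\<in>space M. t \<le> Y x} \<le> measure M {x\<in>space M. t \<le> X x}"
  shows "integral\<^sup>L M Y \<le> integral\<^sup>L M X"
proof -
  interpret prob_space M by fact
  have iX: "integrable M X" apply (rule integrable_const_bound[where B=1]) using Xb by auto
  have iY: "integrable M Y" apply (rule integrable_const_bound[where B=1]) using Yb by auto
  have lY: "(\<integral>\<^sup>+x. ennreal (Y x) \<partial>M) = (\<integral>\<^sup>+t. emeasure M {x\<in>space M. 0 \<le> t \<and> t \<le> Y x} \<partial>lborel)"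
    by (rule layer[OF sigma_finite_measure_axioms Y]) (use Yb in auto)
  have lX: "(\<integral>\<^sup>+x. ennreal (X x) \<partial>M) = (\<integral>\<^sup>+t. emeasure M {x\<in>space M. 0 \<le> t \<and> t \<le> X x} \<partial>lborel)"
    by (rule layer[OF sigma_finite_measure_axioms X]) (use Xb in auto)
  have "(\<integral>\<^sup>+t. emeasure M {x\<in>space M. 0 \<le> t \<and> t \<le> Y x} \<partial>lborel) \<le> (\<integral>\<^sup>+t. emeasure M {x\<in>space M. 0 \<le> t \<and> t \<le> X x} \<partial>lborel)"
  proof (rule nn_integral_mono)
    fix t :: real
    show "emeasure M {x\<in>space M. 0 \<le> t \<and> t \<le> Y x} \<le> emeasure M {x\<in>space M. 0 \<le> t \<and> t \<le> X x}"
    proof (cases "0 \<le> t")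
      case True
      then show ?thesis using dom[OF True] by (simp add: emeasure_eq_measure)
    next
      case False
      then have e: "{x\<in>space M. 0 \<le> t \<and> t \<le> Y x} = {}" "{x\<in>space M. 0 \<le> t \<and> t \<le> X x} = {}" by auto
      show ?thesis by (simp only: e order_refl)
    qed
  qed
  then have "(\<integral>\<^sup>+x. ennreal (Y x) \<partial>M) \<le> (\<integral>\<^sup>+x. ennreal (X x) \<partial>M)" by (simp only: lX lY)
  moreover have "(\<integral>\<^sup>+x. ennreal (Y x) \<partial>M) = ennreal (integral\<^sup>L M Y)"
    by (rule nn_integral_eq_integral[OF iY]) (use Yb in auto)
  moreover have "(\<integral>\<^sup>+x. ennreal (X x) \<partial>M) = ennreal (integral\<^sup>L M X)"
    by (rule nn_integral_eq_integral[OF iX]) (use Xb in auto)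
  moreover have "0 \<le> integral\<^sup>L M Y" by (rule integral_nonneg_AE) (use Yb in auto)
  moreover have "0 \<le> integral\<^sup>L M X" by (rule integral_nonneg_AE) (use Xb in auto)
  ultimately show ?thesis by (metis ennreal_le_iff)
qed

lemma comp_consequences:
  fixes W :: "'a \<Rightarrow> real"
  assumes P: "prob_space M" and W[measurable]: "W \<in> borel_measurable M"
    and Wb: "\<And>z. z \<in> space M \<Longrightarrow> 0 \<le> W z \<and> W z \<le> 1"
    and comp: "\<forall>t::real. 0 \<le> t \<and> t \<le> 1/2 \<longrightarrow>
        measure M {z \<in> space M. W z \<in> {t..<1/2}} \<ge> measure M {z \<in> space M. W z \<in> {1/2..1-t}}"
  shows "measure M {z\<in>space M. 1/2 \<le> W z} \<le> integral\<^sup>L M W"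
    and "measure M {z\<in>space M. 1/2 \<le> W z} \<le> 2 * integral\<^sup>L M (\<lambda>z. (W z)^2)"
proof -
  interpret prob_space M by fact
  have intg: "integrable M f" if f: "f \<in> borel_measurable M" and fb: "\<And>z. z\<in>space M \<Longrightarrow> \<bar>f z\<bar> \<le> 1" for f :: "'a \<Rightarrow> real"
    apply (rule integrable_const_bound[where B=1]) using f fb by auto
  define A where "A z = (if W z < 1/2 then W z else 0)" for z
  define B where "B z = (if 1/2 \<le> W z then 1 - W z else 0)" for z
  define C1 where "C1 z = (if 1/2 \<le> W z then W z else 0)" for z
  define C2 where "C2 z = (if 1/2 \<le> W z then (W z)^2 else 0)" for z
  define I where "I z = (if 1/2 \<le> W z then 1 else (0::real))" for z
  have [measurable]: "A \<in> borel_measurable M" "B \<in> borel_measurable M" "C1 \<in> borel_measurable M"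
    "C2 \<in> borel_measurable M" "I \<in> borel_measurable M"
    unfolding A_def[abs_def] B_def[abs_def] C1_def[abs_def] C2_def[abs_def] I_def[abs_def] by measurable
  have Ab: "0 \<le> A z \<and> A z \<le> 1/2" if "z \<in> space M" for z using Wb[OF that] by (auto simp: A_def)
  have Bb: "0 \<le> B z \<and> B z \<le> 1/2" if "z \<in> space M" for z using Wb[OF that] by (auto simp: B_def)
  have C1b: "0 \<le> C1 z \<and> C1 z \<le> 1" if "z \<in> space M" for z using Wb[OF that] by (auto simp: C1_def)
  have C2b: "0 \<le> C2 z \<and> C2 z \<le> 1" if "z \<in> space M" for z using Wb[OF that]
    by (auto simp: C2_def power_le_one)
  have Ab': "\<forall>z\<in>space M. 0 \<le> A z \<and> A z \<le> 1 \<and> (A z)^2 \<le> 1"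
  proof
    fix z assume z: "z \<in> space M"
    have "0 \<le> A z" "A z \<le> 1" using Ab[OF z] by auto
    then show "0 \<le> A z \<and> A z \<le> 1 \<and> (A z)^2 \<le> 1" by (auto intro!: power_le_one)
  qed
  have Bb': "\<forall>z\<in>space M. 0 \<le> B z \<and> B z \<le> 1 \<and> (B z)^2 \<le> 1"
  proof
    fix z assume z: "z \<in> space M"
    have "0 \<le> B z" "B z \<le> 1" using Bb[OF z] by auto
    then show "0 \<le> B z \<and> B z \<le> 1 \<and> (B z)^2 \<le> 1" by (auto intro!: power_le_one)
  qed
  have iA: "integrable M A"
  proof (rule intg)
    fix z assume "z \<in> space M"
    with Ab[of z] show "\<bar>A z\<bar> \<le> 1" by auto
  qed simp
  have iB: "integrable M B"
  proof (rule intg)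
    fix z assume "z \<in> space M"
    with Bb[of z] show "\<bar>B z\<bar> \<le> 1" by auto
  qed simp
  have iC1: "integrable M C1"
  proof (rule intg)
    fix z assume "z \<in> space M"
    with C1b[of z] show "\<bar>C1 z\<bar> \<le> 1" by auto
  qed simp
  have iC2: "integrable M C2"
  proof (rule intg)
    fix z assume "z \<in> space M"
    with C2b[of z] show "\<bar>C2 z\<bar> \<le> 1" by auto
  qed simp
  have iA2: "integrable M (\<lambda>z. (A z)^2)"
  proof (rule intg)
    fix z assume "z \<in> space M"
    with Ab[of z] show "\<bar>(A z)^2\<bar> \<le> 1" by (auto intro!: power_le_one)
  qed simp
  have iB2: "integrable M (\<lambda>z. (B z)^2)"
  proof (rule intg)
    fix z assume "z \<in> space M"
    with Bb[of z] show "\<bar>(B z)^2\<bar> \<le> 1" by (auto intro!: power_le_one)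
  qed simp
  have PI: "measure M {z\<in>space M. 1/2 \<le> W z} = integral\<^sup>L M I"
  proof -
    have "integral\<^sup>L M I = integral\<^sup>L M (indicator {z\<in>space M. 1/2 \<le> W z})"
      by (rule Bochner_Integration.integral_cong[OF refl]) (auto simp: I_def indicator_def)
    then show ?thesis by simp
  qed
  have domAB: "measure M {x\<in>space M. t \<le> B x} \<le> measure M {x\<in>space M. t \<le> A x}" if t: "0 \<le> t" for t
  proof -
    consider "t = 0" | "0 < t \<and> t \<le> 1/2" | "1/2 < t" using t by linarith
    then show ?thesis
    proof cases
      case 1
      then have "{x\<in>space M. t \<le> B x} = space M" "{x\<in>space M. t \<le> A x} = space M"
        using Ab Bb by auto
      then show ?thesis by simp
    next
      case 2
      then have "{x\<in>space M. t \<le> B x} = {z \<in> space M. W z \<in> {1/2..1-t}}"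
        "{x\<in>space M. t \<le> A x} = {z \<in> space M. W z \<in> {t..<1/2}}"
        by (auto simp: A_def B_def)
      then show ?thesis using comp 2 by simp
    next
      case 3
      then have e: "{x\<in>space M. t \<le> B x} = {}" using Bb by force
      show ?thesis unfolding e by simp
    qed
  qed
  have EAB: "integral\<^sup>L M B \<le> integral\<^sup>L M A"
    by (rule dominance[OF P]) (use Ab' Bb' domAB in auto)
  have EAB2: "integral\<^sup>L M (\<lambda>z. (B z)^2) \<le> integral\<^sup>L M (\<lambda>z. (A z)^2)"
  proof (rule dominance[OF P])
    fix t :: real assume t: "0 \<le> t"
    have "{x\<in>space M. t \<le> (B x)^2} = {x\<in>space M. sqrt t \<le> B x}"
      using Bb t by (auto simp: real_sqrt_le_iff' real_le_rsqrt)
    moreover have "{x\<in>space M. t \<le> (A x)^2} = {x\<in>space M. sqrt t \<le> A x}"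
      using Ab t by (auto simp: real_sqrt_le_iff' real_le_rsqrt)
    ultimately show "measure M {x\<in>space M. t \<le> (B x)^2} \<le> measure M {x\<in>space M. t \<le> (A x)^2}"
      using domAB[of "sqrt t"] t by simp
  qed (use Ab' Bb' in auto)
  have "integral\<^sup>L M I = integral\<^sup>L M (\<lambda>z. B z + C1 z)"
    by (rule Bochner_Integration.integral_cong[OF refl]) (auto simp: I_def B_def C1_def)
  also have "\<dots> = integral\<^sup>L M B + integral\<^sup>L M C1" by (rule Bochner_Integration.integral_add[OF iB iC1])
  also have "\<dots> \<le> integral\<^sup>L M A + integral\<^sup>L M C1" using EAB by simp
  also have "\<dots> = integral\<^sup>L M (\<lambda>z. A z + C1 z)" by (rule Bochner_Integration.integral_add[OF iA iC1, symmetric])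
  also have "\<dots> = integral\<^sup>L M W"
    by (rule Bochner_Integration.integral_cong[OF refl]) (auto simp: A_def C1_def)
  finally show "measure M {z\<in>space M. 1/2 \<le> W z} \<le> integral\<^sup>L M W" using PI by simp
  have "integral\<^sup>L M I \<le> 2 * integral\<^sup>L M (\<lambda>z. (B z)^2 + C2 z)"
  proof -
    have "integral\<^sup>L M I \<le> integral\<^sup>L M (\<lambda>z. 2 * ((B z)^2 + C2 z))"
    proof (rule Bochner_Integration.integral_mono)
      show "integrable M I" by (rule intg) (auto simp: I_def)
      show "integrable M (\<lambda>z. 2 * ((B z)^2 + C2 z))" using iB2 iC2 by simp
      fix z assume z: "z \<in> space M"
      show "I z \<le> 2 * ((B z)^2 + C2 z)"
      proof (cases "1/2 \<le> W z")
        case True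
        have "0 \<le> (2 * W z - 1)^2" by simp
        then show ?thesis using True by (simp add: I_def B_def C2_def power2_eq_square algebra_simps)
      next
        case False
        then show ?thesis by (simp add: I_def B_def C2_def)
      qed
    qed
    then show ?thesis by (simp only: integral_mult_right_zero)
  qed
  also have "integral\<^sup>L M (\<lambda>z. (B z)^2 + C2 z) = integral\<^sup>L M (\<lambda>z. (B z)^2) + integral\<^sup>L M C2"
    by (rule Bochner_Integration.integral_add[OF iB2 iC2])
  also have "\<dots> \<le> integral\<^sup>L M (\<lambda>z. (A z)^2) + integral\<^sup>L M C2" using EAB2 by simp
  also have "\<dots> = integral\<^sup>L M (\<lambda>z. (A z)^2 + C2 z)" by (rule Bochner_Integration.integral_add[OF iA2 iC2, symmetric])
  also have "\<dots> = integral\<^sup>L M (\<lambda>z. (W z)^2)"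
    by (rule Bochner_Integration.integral_cong[OF refl]) (auto simp: A_def C2_def)
  finally show "measure M {z\<in>space M. 1/2 \<le> W z} \<le> 2 * integral\<^sup>L M (\<lambda>z. (W z)^2)" using PI by simp
qed




lemma pointwise:
  fixes p :: "nat \<Rightarrow> real" and K m y :: nat
  assumes K: "K \<ge> 2" and nn: "\<forall>j. 0 \<le> p j" and s1: "(\<Sum>j\<in>{1..K}. p j) = 1"
    and out: "y \<notin> {1..K} \<Longrightarrow> p y = 0" and m: "m \<in> {1..K}" and mx: "\<forall>j\<in>{1..K}. p j \<le> p m"
  shows "(if m \<noteq> y then 1 else 0) \<le> (if 1/2 \<le> 1 - p y then 1 else (0::real))"
    and "(1 - p y) - (1 - (\<Sum>j\<in>{1..K}. (p j)^2)) \<le> (if m \<noteq> y then 1 else 0)"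
    and "y \<in> {1..K} \<Longrightarrow> 2 * (1 - p y)^2 \<le> 4 * (real K - 1) / real K * ((1 - p y) - 1/2 * (1 - (\<Sum>j\<in>{1..K}. (p j)^2)))"
proof -
  define S where "S = {1..K}"
  have fS: "finite S" by (simp add: S_def)
  have le1: "p j \<le> 1" if "j \<in> S" for j
  proof -
    have "p j \<le> (\<Sum>i\<in>S. p i)" using that fS nn by (intro member_le_sum) auto
    then show ?thesis using s1 S_def by simp
  qed
  have sq_le: "(\<Sum>j\<in>S. (p j)^2) \<le> 1"
  proof -
    have "(\<Sum>j\<in>S. (p j)^2) \<le> (\<Sum>j\<in>S. p j)"
      by (intro sum_mono) (use le1 nn in \<open>auto simp: power2_eq_square intro: mult_left_le\<close>)
    then show ?thesis using s1 S_def by simp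
  qed
  show "(if m \<noteq> y then 1 else 0) \<le> (if 1/2 \<le> 1 - p y then 1 else (0::real))"
  proof (cases "m = y")
    case False
    show ?thesis
    proof (cases "y \<in> S")
      case True
      have "p y + p m = (\<Sum>j\<in>{y,m}. p j)" using False by simp
      also have "\<dots> \<le> (\<Sum>j\<in>S. p j)" using True m fS nn S_def by (intro sum_mono2) auto
      finally have "p y + p m \<le> 1" using s1 S_def by simp
      moreover have "p y \<le> p m" using mx True S_def by auto
      ultimately show ?thesis by simp
    next
      case False
      then show ?thesis using out S_def by simp
    qed
  qed (simp add: nn)
  show "(1 - p y) - (1 - (\<Sum>j\<in>{1..K}. (p j)^2)) \<le> (if m \<noteq> y then 1 else 0)"
  proof (cases "m = y")
    case True
    have "(\<Sum>j\<in>S. (p j)^2) \<le> (\<Sum>j\<in>S. p j * p m)"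
      by (intro sum_mono) (use mx nn S_def in \<open>auto simp: power2_eq_square intro: mult_left_mono\<close>)
    also have "\<dots> = p m" using s1 S_def by (simp add: sum_distrib_right[symmetric])
    finally show ?thesis using True S_def by simp
  next
    case False
    then show ?thesis using sq_le nn[rule_format, of y] S_def by simp
  qed
  assume y: "y \<in> {1..K}"
  define T where "T = (\<Sum>j\<in>S-{y}. (p j)^2)"
  define w where "w = 1 - p y"
  have sp: "(\<Sum>j\<in>S. p j) = p y + (\<Sum>j\<in>S-{y}. p j)" using y fS S_def by (simp add: sum.remove)
  have sq: "(\<Sum>j\<in>S. (p j)^2) = (p y)^2 + T" using y fS S_def T_def by (simp add: sum.remove)
  have wsum: "(\<Sum>j\<in>S-{y}. p j) = w" using sp s1 S_def w_def by simp
  have card: "card (S - {y}) = K - 1" using y S_def by simp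
  have cs: "w^2 \<le> T * (real K - 1)"
    using sum_squared_le_sum_of_squares[of p "S - {y}"] wsum card T_def K by (simp add: of_nat_diff)
  have T0: "0 \<le> T" unfolding T_def by (simp add: sum_nonneg)
  have k: "real K \<ge> 2" using K by simp
  have aux: "\<And>a b x::real. 2 * a / b * (2 * x) = 4 * a / b * x"
    by (case_tac "b = 0") (simp_all add: field_simps)
  have key: "real K * w^2 \<le> (real K - 1) * (w^2 + T)" using cs by (simp add: algebra_simps)
  have "2 * w^2 \<le> 2 * (real K - 1) / real K * (w^2 + T)"
    using key k by (simp add: field_simps)
  also have "(w^2 + T) = 2 * (w - 1/2 * (1 - (\<Sum>j\<in>S. (p j)^2)))"
    unfolding sq w_def by (simp add: power2_eq_square algebra_simps)
  also have "2 * (real K - 1) / real K * (2 * (w - 1/2 * (1 - (\<Sum>j\<in>S. (p j)^2))))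
     = 4 * (real K - 1) / real K * (w - 1/2 * (1 - (\<Sum>j\<in>S. (p j)^2)))" by (rule aux)
  finally show "2 * (1 - p y)^2 \<le> 4 * (real K - 1) / real K * ((1 - p y) - 1/2 * (1 - (\<Sum>j\<in>{1..K}. (p j)^2)))"
    unfolding w_def S_def .
qed

lemma pred_eq_nat[measurable (raw)]:
  assumes f: "f \<in> measurable N (count_space UNIV)" and g: "g \<in> measurable N (count_space UNIV)"
  shows "Measurable.pred N (\<lambda>w. f w = (g w :: nat))"
proof -
  have "(\<lambda>w. (\<lambda>i w. i = g w) (f w) w) \<in> measurable N (count_space UNIV)"
    by (rule measurable_compose_countable[OF _ f]) (rule pred_count_space_const2[OF g])
  then show ?thesis by simp
qed


lemma eval_comp:
  assumes ev: "(\<lambda>(h, x). h x) \<in> measurable (R \<Otimes>\<^sub>M Mx) (count_space UNIV)"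
   and a: "a \<in> measurable N R" and b: "b \<in> measurable N Mx"
  shows "(\<lambda>w. (a w) (b w)) \<in> measurable N (count_space UNIV)"
  using measurable_compose[OF measurable_Pair[OF a b] ev] by simp

lemma measure_as_integral:
  "measure M {x\<in>space M. P x} = (\<integral>x. (if P x then 1 else (0::real)) \<partial>M)"
proof -
  have "(\<integral>x. (if P x then 1 else (0::real)) \<partial>M) = (\<integral>x. indicator {x\<in>space M. P x} x \<partial>M)"
    by (rule Bochner_Integration.integral_cong[OF refl]) (auto simp: indicator_def)
  also have "\<dots> = measure M ({x\<in>space M. P x} \<inter> space M)" by (rule Bochner_Integration.integral_indicator)
  also have "{x\<in>space M. P x} \<inter> space M = {x\<in>space M. P x}" by auto
  finally show ?thesis by simp
qed

lemma int_bounded: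
  fixes f :: "'a \<Rightarrow> real"
  assumes "finite_measure M" "f \<in> borel_measurable M" "\<And>x. x \<in> space M \<Longrightarrow> \<bar>f x\<bar> \<le> B"
  shows "integrable M f"
  by (rule finite_measure.integrable_const_bound[OF assms(1), where B=B]) (use assms in auto)

lemma pair_prob: "prob_space A \<Longrightarrow> prob_space B \<Longrightarrow> prob_space (A \<Otimes>\<^sub>M B)"
proof -
  assume a: "prob_space A" and b: "prob_space B"
  interpret X: pair_prob_space A B
    by (simp add: pair_prob_space_def pair_sigma_finite_def a b prob_space_imp_sigma_finite)
  show ?thesis by (rule X.P.prob_space_axioms)
qed

theorem theorem3:
  fixes K :: nat and Mx :: "'x measure" and D :: "('x \<times> nat) measure"
    and \<rho> :: "('x \<Rightarrow> nat) measure" and hmv :: "'x \<Rightarrow> nat"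
  assumes K: "K \<ge> 2"
    and D_prob: "prob_space D"
    and D_sets: "sets D = sets (Mx \<Otimes>\<^sub>M count_space UNIV)"
    and D_labels: "AE z in D. snd z \<in> {1..K}"
    and rho_prob: "prob_space \<rho>"
    and rho_range: "\<forall>h\<in>space \<rho>. \<forall>x. h x \<in> {1..K}"
    and eval_meas: "(\<lambda>(h, x). h x) \<in> measurable (\<rho> \<Otimes>\<^sub>M Mx) (count_space UNIV)"
    and mv: "is_majority_vote K \<rho> hmv"
    and mv_meas: "hmv \<in> measurable Mx (count_space UNIV)"
    and comp: "competent D \<rho>"
  shows "err D hmv \<le> min (4 * (real K - 1) / real K *
              ((\<integral>h. err D h \<partial>\<rho>) - 1/2 * (\<integral>h. (\<integral>h'. disagree D h h' \<partial>\<rho>) \<partial>\<rho>)))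
            (\<integral>h. err D h \<partial>\<rho>)
         \<and> err D hmv \<ge> (\<integral>h. err D h \<partial>\<rho>) - (\<integral>h. (\<integral>h'. disagree D h h' \<partial>\<rho>) \<partial>\<rho>)"
proof -
  interpret D: prob_space D by (rule D_prob)
  interpret R: prob_space \<rho> by (rule rho_prob)
  interpret RD: pair_sigma_finite \<rho> D
    by (simp add: pair_sigma_finite_def R.sigma_finite_measure_axioms D.sigma_finite_measure_axioms)
  interpret DR: pair_sigma_finite D \<rho>
    by (simp add: pair_sigma_finite_def R.sigma_finite_measure_axioms D.sigma_finite_measure_axioms)
  have fRD: "finite_measure (\<rho> \<Otimes>\<^sub>M D)" using pair_prob[OF rho_prob D_prob] by (rule prob_space.finite_measure)
  have fDR: "finite_measure (D \<Otimes>\<^sub>M \<rho>)" using pair_prob[OF D_prob rho_prob] by (rule prob_space.finite_measure)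
  have fR: "finite_measure \<rho>" by (rule R.finite_measure_axioms)
  have fD: "finite_measure D" by (rule D.finite_measure_axioms)
  have mD: "measurable D N = measurable (Mx \<Otimes>\<^sub>M count_space UNIV) N" for N :: "'b measure"
    by (rule measurable_cong_sets[OF D_sets refl])
  have spD: "space D = space Mx \<times> UNIV"
    using sets_eq_imp_space_eq[OF D_sets] by (simp add: space_pair_measure)
  have fstD[measurable]: "fst \<in> measurable D Mx" unfolding mD by (rule measurable_fst)
  have sndD[measurable]: "snd \<in> measurable D (count_space UNIV)" unfolding mD by (rule measurable_snd)
  define S where "S = {1..K}"
  define p where "p x j = measure \<rho> {h\<in>space \<rho>. h x = j}" for x j
  define f where "f h z = (if h (fst z) \<noteq> snd z then 1 else (0::real))" for h :: "'x \<Rightarrow> nat" and z :: "'x \<times> nat"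
  define g where "g h h' z = (if h (fst z) \<noteq> h' (fst z) then 1 else (0::real))" for h h' :: "'x \<Rightarrow> nat" and z :: "'x \<times> nat"
  have m_evx: "(\<lambda>h. h x) \<in> measurable \<rho> (count_space UNIV)" if "x \<in> space Mx" for x
    using eval_comp[OF eval_meas measurable_ident measurable_const[OF that]] by simp
  have m_evRD1: "(\<lambda>q. (fst q) (fst (snd q))) \<in> measurable (\<rho> \<Otimes>\<^sub>M D) (count_space UNIV)"
    by (rule eval_comp[OF eval_meas]) measurable
  have m_evRD2: "(\<lambda>q. snd (snd q)) \<in> measurable (\<rho> \<Otimes>\<^sub>M D) (count_space UNIV)"
    by measurable
  have m_evDR1: "(\<lambda>q. (snd q) (fst (fst q))) \<in> measurable (D \<Otimes>\<^sub>M \<rho>) (count_space UNIV)"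
    by (rule eval_comp[OF eval_meas]) measurable
  have m_evDR2: "(\<lambda>q. snd (fst q)) \<in> measurable (D \<Otimes>\<^sub>M \<rho>) (count_space UNIV)"
    by measurable
  have m_evh: "(\<lambda>z. h (fst z)) \<in> measurable D (count_space UNIV)" if "h \<in> space \<rho>" for h
    using eval_comp[OF eval_meas measurable_const[OF that] fstD] by simp
  have m_evRRD1: "(\<lambda>q. (fst (fst q)) (fst (snd (fst q)))) \<in> measurable ((\<rho> \<Otimes>\<^sub>M D) \<Otimes>\<^sub>M \<rho>) (count_space UNIV)"
    by (rule eval_comp[OF eval_meas]) measurable
  have m_evRRD2: "(\<lambda>q. (snd q) (fst (snd (fst q)))) \<in> measurable ((\<rho> \<Otimes>\<^sub>M D) \<Otimes>\<^sub>M \<rho>) (count_space UNIV)"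
    by (rule eval_comp[OF eval_meas]) measurable
  have m_f: "(\<lambda>(h, z). f h z) \<in> borel_measurable (\<rho> \<Otimes>\<^sub>M D)"
  proof -
    have [measurable]: "Measurable.pred (\<rho> \<Otimes>\<^sub>M D) (\<lambda>q. (fst q) (fst (snd q)) = snd (snd q))"
      by (rule pred_eq_nat[OF m_evRD1 m_evRD2])
    have "(\<lambda>q. if (fst q) (fst (snd q)) \<noteq> snd (snd q) then 1 else (0::real)) \<in> borel_measurable (\<rho> \<Otimes>\<^sub>M D)"
      by measurable
    then show ?thesis by (simp add: f_def case_prod_beta')
  qed
  have m_fDR: "(\<lambda>(z, h). f h z) \<in> borel_measurable (D \<Otimes>\<^sub>M \<rho>)"
  proof -
    have [measurable]: "Measurable.pred (D \<Otimes>\<^sub>M \<rho>) (\<lambda>q. (snd q) (fst (fst q)) = snd (fst q))"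
      by (rule pred_eq_nat[OF m_evDR1 m_evDR2])
    have "(\<lambda>q. if (snd q) (fst (fst q)) \<noteq> snd (fst q) then 1 else (0::real)) \<in> borel_measurable (D \<Otimes>\<^sub>M \<rho>)"
      by measurable
    then show ?thesis by (simp add: f_def case_prod_beta')
  qed
  have m_ind: "(\<lambda>(z, h). if h (fst z) = j then 1 else (0::real)) \<in> borel_measurable (D \<Otimes>\<^sub>M \<rho>)" for j
  proof -
    have [measurable]: "Measurable.pred (D \<Otimes>\<^sub>M \<rho>) (\<lambda>q. (snd q) (fst (fst q)) = j)"
      using m_evDR1 by measurable
    have "(\<lambda>q. if (snd q) (fst (fst q)) = j then 1 else (0::real)) \<in> borel_measurable (D \<Otimes>\<^sub>M \<rho>)"
      by measurable
    then show ?thesis by (simp add: case_prod_beta')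
  qed
  have m_g1: "(\<lambda>(h', z). g h h' z) \<in> borel_measurable (\<rho> \<Otimes>\<^sub>M D)" if h: "h \<in> space \<rho>" for h
  proof -
    have a: "(\<lambda>q. h (fst (snd q))) \<in> measurable (\<rho> \<Otimes>\<^sub>M D) (count_space UNIV)"
      using measurable_compose[OF measurable_snd[of \<rho> D] m_evh[OF h]] by simp
    have [measurable]: "Measurable.pred (\<rho> \<Otimes>\<^sub>M D) (\<lambda>q. h (fst (snd q)) = (fst q) (fst (snd q)))"
      by (rule pred_eq_nat[OF a m_evRD1])
    have "(\<lambda>q. if h (fst (snd q)) \<noteq> (fst q) (fst (snd q)) then 1 else (0::real)) \<in> borel_measurable (\<rho> \<Otimes>\<^sub>M D)"
      by measurable
    then show ?thesis by (simp add: g_def case_prod_beta')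
  qed
  have m_g2: "(\<lambda>((h, z), h'). g h h' z) \<in> borel_measurable ((\<rho> \<Otimes>\<^sub>M D) \<Otimes>\<^sub>M \<rho>)"
  proof -
    have [measurable]: "Measurable.pred ((\<rho> \<Otimes>\<^sub>M D) \<Otimes>\<^sub>M \<rho>) (\<lambda>q. (fst (fst q)) (fst (snd (fst q))) = (snd q) (fst (snd (fst q))))"
      by (rule pred_eq_nat[OF m_evRRD1 m_evRRD2])
    have "(\<lambda>q. if (fst (fst q)) (fst (snd (fst q))) \<noteq> (snd q) (fst (snd (fst q))) then 1 else (0::real)) \<in> borel_measurable ((\<rho> \<Otimes>\<^sub>M D) \<Otimes>\<^sub>M \<rho>)"
      by measurable
    then show ?thesis by (simp add: g_def case_prod_beta')
  qed
  have x_sp: "fst z \<in> space Mx" if "z \<in> space D" for z using that spD by auto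
  have meas_set: "{h\<in>space \<rho>. h x = j} \<in> sets \<rho>" if "x \<in> space Mx" for x j
    using m_evx[OF that] by measurable
  have p_int: "p x j = (\<integral>h. (if h x = j then 1 else 0) \<partial>\<rho>)" for x j
    unfolding p_def by (rule measure_as_integral)
  have p_nn: "0 \<le> p x j" for x j unfolding p_def by simp
  have p_le1: "p x j \<le> 1" for x j unfolding p_def by (rule R.prob_le_1)
  have p_out: "p x j = 0" if "j \<notin> S" for x j
  proof -
    have e: "{h\<in>space \<rho>. h x = j} = {}" using rho_range that S_def by auto
    show ?thesis unfolding p_def e by simp
  qed
  have int_ind: "integrable \<rho> (\<lambda>h. if h x = j then 1 else (0::real))" if "x \<in> space Mx" for x j
  proof -
    have [measurable]: "Measurable.pred \<rho> (\<lambda>h. h x = j)" by (rule pred_count_space_const1[OF m_evx[OF that]])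
    show ?thesis by (rule int_bounded[OF fR, where B=1]) auto
  qed
  have p_sum: "(\<Sum>j\<in>S. p x j) = 1" if x: "x \<in> space Mx" for x
  proof -
    have "(\<Sum>j\<in>S. p x j) = (\<Sum>j\<in>S. (\<integral>h. (if h x = j then 1 else 0) \<partial>\<rho>))" by (simp add: p_int)
    also have "\<dots> = (\<integral>h. (\<Sum>j\<in>S. (if h x = j then 1 else 0)) \<partial>\<rho>)"
      by (rule Bochner_Integration.integral_sum[symmetric]) (rule int_ind[OF x])
    also have "\<dots> = (\<integral>h. 1 \<partial>\<rho>)"
    proof (rule Bochner_Integration.integral_cong[OF refl])
      fix h assume "h \<in> space \<rho>"
      then have "h x \<in> S" using rho_range S_def by auto
      then show "(\<Sum>j\<in>S. (if h x = j then 1 else 0)) = (1::real)" by (simp add: S_def)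
    qed
    also have "\<dots> = 1" by (simp add: R.prob_space)
    finally show ?thesis .
  qed
  have W_eq: "W_rho \<rho> z = 1 - p (fst z) (snd z)" if z: "z \<in> space D" for z
  proof -
    have "{h \<in> space \<rho>. h (fst z) \<noteq> snd z} = space \<rho> - {h\<in>space \<rho>. h (fst z) = snd z}" by auto
    then show ?thesis unfolding W_rho_def p_def using R.prob_compl[OF meas_set[OF x_sp[OF z]]] by simp
  qed
  have W_int: "W_rho \<rho> z = (\<integral>h. f h z \<partial>\<rho>)" for z
    unfolding W_rho_def f_def by (rule measure_as_integral)
  have err_int: "err D h = (\<integral>z. f h z \<partial>D)" for h
    unfolding err_def f_def by (rule measure_as_integral)
  have dis_int: "disagree D h h' = (\<integral>z. g h h' z \<partial>D)" for h h'
    unfolding disagree_def g_def by (rule measure_as_integral)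
  have W_meas[measurable]: "(\<lambda>z. W_rho \<rho> z) \<in> borel_measurable D"
    unfolding W_int by (rule R.borel_measurable_lebesgue_integral[OF m_fDR])
  have W_b: "0 \<le> W_rho \<rho> z \<and> W_rho \<rho> z \<le> 1" for z
    unfolding W_rho_def by (simp add: R.prob_le_1)
  define dis where "dis z = 1 - (\<Sum>j\<in>S. (p (fst z) j)^2)" for z :: "'x \<times> nat"
  have p_meas[measurable]: "(\<lambda>z. p (fst z) j) \<in> borel_measurable D" for j
    unfolding p_int by (rule R.borel_measurable_lebesgue_integral[OF m_ind])
  have dis_meas[measurable]: "dis \<in> borel_measurable D" unfolding dis_def[abs_def] by measurable
  have dis_b: "\<bar>dis z\<bar> \<le> 1 + real K" for z
  proof -
    have "(\<Sum>j\<in>S. (p (fst z) j)^2) \<le> (\<Sum>j\<in>S. 1)"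
      by (rule sum_mono) (simp add: p_nn p_le1 power_le_one)
    moreover have "0 \<le> (\<Sum>j\<in>S. (p (fst z) j)^2)" by (simp add: sum_nonneg)
    ultimately show ?thesis unfolding dis_def S_def by simp
  qed
  have iW: "integrable D (\<lambda>z. W_rho \<rho> z)"
    by (rule int_bounded[OF fD W_meas, where B=1]) (use W_b in auto)
  have iW2: "integrable D (\<lambda>z. (W_rho \<rho> z)^2)"
    by (rule int_bounded[OF fD _, where B=1]) (use W_b in \<open>measurable, auto intro: power_le_one\<close>)
  have idis: "integrable D dis"
    by (rule int_bounded[OF fD dis_meas dis_b])
  have E1: "(\<integral>h. err D h \<partial>\<rho>) = (\<integral>z. W_rho \<rho> z \<partial>D)"
  proof -
    have "integrable (\<rho> \<Otimes>\<^sub>M D) (\<lambda>(h, z). f h z)"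
      by (rule int_bounded[OF fRD m_f, where B=1]) (auto simp: f_def)
    then have "(\<integral>z. (\<integral>h. f h z \<partial>\<rho>) \<partial>D) = (\<integral>h. (\<integral>z. f h z \<partial>D) \<partial>\<rho>)"
      by (rule RD.Fubini_integral)
    then show ?thesis by (simp add: err_int W_int)
  qed
  define q where "q h z = (\<integral>h'. g h h' z \<partial>\<rho>)" for h z
  have q_meas: "(\<lambda>(h, z). q h z) \<in> borel_measurable (\<rho> \<Otimes>\<^sub>M D)"
  proof -
    have "(\<lambda>x. \<integral>h'. (case_prod (\<lambda>h z h'. g h h' z)) x h' \<partial>\<rho>) \<in> borel_measurable (\<rho> \<Otimes>\<^sub>M D)"
      by (rule R.borel_measurable_lebesgue_integral) (use m_g2 in simp)
    then show ?thesis by (simp add: q_def case_prod_beta')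
  qed
  have q_meas_eq: "q h z = measure \<rho> {h'\<in>space \<rho>. h (fst z) \<noteq> h' (fst z)}" for h z
    unfolding q_def g_def by (rule measure_as_integral[symmetric])
  have E2a: "(\<integral>h'. disagree D h h' \<partial>\<rho>) = (\<integral>z. q h z \<partial>D)" if h: "h \<in> space \<rho>" for h
  proof -
    have "integrable (\<rho> \<Otimes>\<^sub>M D) (\<lambda>(h', z). g h h' z)"
      by (rule int_bounded[OF fRD m_g1[OF h], where B=1]) (auto simp: g_def)
    then have "(\<integral>z. (\<integral>h'. g h h' z \<partial>\<rho>) \<partial>D) = (\<integral>h'. (\<integral>z. g h h' z \<partial>D) \<partial>\<rho>)"
      by (rule RD.Fubini_integral)
    then show ?thesis by (simp add: dis_int q_def)
  qed
  have E2b: "(\<integral>h. (\<integral>z. q h z \<partial>D) \<partial>\<rho>) = (\<integral>z. (\<integral>h. q h z \<partial>\<rho>) \<partial>D)"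
  proof -
    have "integrable (\<rho> \<Otimes>\<^sub>M D) (\<lambda>(h, z). q h z)"
      by (rule int_bounded[OF fRD q_meas, where B=1]) (auto simp: q_meas_eq R.prob_le_1)
    then show ?thesis by (rule RD.Fubini_integral[symmetric])
  qed
  have E2c: "(\<integral>h. q h z \<partial>\<rho>) = dis z" if z: "z \<in> space D" for z
  proof -
    define x where "x = fst z"
    have x: "x \<in> space Mx" using x_sp[OF z] x_def by simp
    have qh: "q h z = 1 - (\<Sum>j\<in>S. p x j * (if h x = j then 1 else 0))" if h: "h \<in> space \<rho>" for h
    proof -
      have hS: "h x \<in> S" using rho_range h S_def by auto
      have "{h'\<in>space \<rho>. h x \<noteq> h' x} = space \<rho> - {h'\<in>space \<rho>. h' x = h x}" by auto
      then have "q h z = 1 - p x (h x)"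
        unfolding q_meas_eq p_def x_def[symmetric] using R.prob_compl[OF meas_set[OF x]] by simp
      moreover have "(\<Sum>j\<in>S. p x j * (if h x = j then 1 else 0)) = p x (h x)"
      proof -
        have "(\<Sum>j\<in>S. p x j * (if h x = j then 1 else 0)) = (\<Sum>j\<in>S. if h x = j then p x (h x) else 0)"
          by (rule sum.cong) auto
        also have "\<dots> = p x (h x)" using hS by (simp add: sum.delta' S_def)
        finally show ?thesis .
      qed
      ultimately show ?thesis by simp
    qed
    have iS: "integrable \<rho> (\<lambda>h. \<Sum>j\<in>S. p x j * (if h x = j then 1 else 0))"
      using int_ind[OF x] by (intro Bochner_Integration.integrable_sum integrable_mult_right) auto
    have "(\<integral>h. q h z \<partial>\<rho>) = (\<integral>h. 1 - (\<Sum>j\<in>S. p x j * (if h x = j then 1 else 0)) \<partial>\<rho>)"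
      by (rule Bochner_Integration.integral_cong[OF refl]) (rule qh)
    also have "\<dots> = (\<integral>h. 1 \<partial>\<rho>) - (\<integral>h. (\<Sum>j\<in>S. p x j * (if h x = j then 1 else 0)) \<partial>\<rho>)"
      by (rule Bochner_Integration.integral_diff[OF _ iS]) simp
    also have "(\<integral>h. (\<Sum>j\<in>S. p x j * (if h x = j then 1 else 0)) \<partial>\<rho>) = (\<Sum>j\<in>S. (\<integral>h. p x j * (if h x = j then 1 else 0) \<partial>\<rho>))"
      by (rule Bochner_Integration.integral_sum) (use int_ind[OF x] in auto)
    also have "\<dots> = (\<Sum>j\<in>S. p x j * p x j)"
      by (rule sum.cong[OF refl]) (simp add: p_int[of x])
    finally show ?thesis by (simp add: dis_def x_def power2_eq_square R.prob_space)
  qed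
  have E2: "(\<integral>h. (\<integral>h'. disagree D h h' \<partial>\<rho>) \<partial>\<rho>) = (\<integral>z. dis z \<partial>D)"
  proof -
    have "(\<integral>h. (\<integral>h'. disagree D h h' \<partial>\<rho>) \<partial>\<rho>) = (\<integral>h. (\<integral>z. q h z \<partial>D) \<partial>\<rho>)"
      by (rule Bochner_Integration.integral_cong[OF refl]) (rule E2a)
    also have "\<dots> = (\<integral>z. (\<integral>h. q h z \<partial>\<rho>) \<partial>D)" by (rule E2b)
    also have "\<dots> = (\<integral>z. dis z \<partial>D)"
      by (rule Bochner_Integration.integral_cong[OF refl]) (rule E2c)
    finally show ?thesis .
  qed
  define c where "c = 4 * (real K - 1) / real K"
  have PW: "f hmv z \<le> (if 1/2 \<le> W_rho \<rho> z then 1 else 0)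
      \<and> W_rho \<rho> z - dis z \<le> f hmv z
      \<and> (snd z \<in> {1..K} \<longrightarrow> 2 * (W_rho \<rho> z)^2 \<le> c * (W_rho \<rho> z - 1/2 * dis z))"
    if z: "z \<in> space D" for z
  proof -
    define x where "x = fst z"
    define y where "y = snd z"
    have x: "x \<in> space Mx" using x_sp[OF z] x_def by simp
    have hm: "hmv x \<in> {1..K}" and mx: "\<forall>j\<in>{1..K}. p x j \<le> p x (hmv x)"
      using mv unfolding is_majority_vote_def p_def by auto
    have s1: "(\<Sum>j\<in>{1..K}. p x j) = 1" using p_sum[OF x] S_def by simp
    have out: "y \<notin> {1..K} \<Longrightarrow> p x y = 0" using p_out S_def by simp
    have nn: "\<forall>j. 0 \<le> p x j" using p_nn by simp
    note pw = pointwise[OF K nn s1 out hm mx]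
    have Wz: "W_rho \<rho> z = 1 - p x y" using W_eq[OF z] x_def y_def by simp
    have dz: "dis z = 1 - (\<Sum>j\<in>{1..K}. (p x j)^2)" using dis_def x_def S_def by simp
    have fz: "f hmv z = (if hmv x \<noteq> y then 1 else 0)" using f_def x_def y_def by simp
    show ?thesis unfolding Wz dz fz c_def y_def[symmetric] using pw by simp
  qed
  have fhmv_meas: "(\<lambda>z. f hmv z) \<in> borel_measurable D"
  proof -
    have a: "(\<lambda>z. hmv (fst z)) \<in> measurable D (count_space UNIV)"
      by (rule measurable_compose[OF fstD mv_meas])
    have [measurable]: "Measurable.pred D (\<lambda>z. hmv (fst z) = snd z)"
      by (rule pred_eq_nat[OF a sndD])
    show ?thesis unfolding f_def by measurable
  qed
  have ifh: "integrable D (\<lambda>z. f hmv z)"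
    by (rule int_bounded[OF fD fhmv_meas, where B=1]) (auto simp: f_def)
  have setm: "{z\<in>space D. 1/2 \<le> W_rho \<rho> z} \<in> sets D"
    by (rule borel_measurable_le[where f="\<lambda>_. 1/2" and g="\<lambda>z. W_rho \<rho> z"]) (simp_all add: W_meas)
  have predW: "Measurable.pred D (\<lambda>z. 1/2 \<le> W_rho \<rho> z)"
    unfolding pred_def by (rule setm)
  have mI: "(\<lambda>z. if 1/2 \<le> W_rho \<rho> z then 1 else (0::real)) \<in> borel_measurable D"
    by (rule measurable_If[OF _ _ setm]) simp_all
  have iI: "integrable D (\<lambda>z. if 1/2 \<le> W_rho \<rho> z then 1 else (0::real))"
    by (rule int_bounded[OF fD mI, where B=1]) auto
  have errhmv: "err D hmv = (\<integral>z. f hmv z \<partial>D)" by (rule err_int)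
  have compD: "\<forall>t::real. 0 \<le> t \<and> t \<le> 1/2 \<longrightarrow>
        measure D {z \<in> space D. W_rho \<rho> z \<in> {t..<1/2}} \<ge> measure D {z \<in> space D. W_rho \<rho> z \<in> {1/2..1-t}}"
    using comp unfolding competent_def by blast
  note cc = comp_consequences[OF D_prob W_meas W_b compD]
  have I1: "err D hmv \<le> measure D {z\<in>space D. 1/2 \<le> W_rho \<rho> z}"
    unfolding errhmv measure_as_integral
    by (rule Bochner_Integration.integral_mono[OF ifh iI]) (use PW in blast)
  have I2: "(\<integral>z. W_rho \<rho> z \<partial>D) - (\<integral>z. dis z \<partial>D) \<le> err D hmv"
  proof -
    have "(\<integral>z. W_rho \<rho> z \<partial>D) - (\<integral>z. dis z \<partial>D) = (\<integral>z. W_rho \<rho> z - dis z \<partial>D)"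
      by (rule Bochner_Integration.integral_diff[OF iW idis, symmetric])
    also have "\<dots> \<le> (\<integral>z. f hmv z \<partial>D)"
      by (rule Bochner_Integration.integral_mono[OF Bochner_Integration.integrable_diff[OF iW idis] ifh]) (use PW in blast)
    finally show ?thesis unfolding errhmv .
  qed
  have I3: "2 * (\<integral>z. (W_rho \<rho> z)^2 \<partial>D) \<le> c * ((\<integral>z. W_rho \<rho> z \<partial>D) - 1/2 * (\<integral>z. dis z \<partial>D))"
  proof -
    have i3: "integrable D (\<lambda>z. c * (W_rho \<rho> z - 1/2 * dis z))"
      by (intro integrable_mult_right Bochner_Integration.integrable_diff iW idis)
    have "2 * (\<integral>z. (W_rho \<rho> z)^2 \<partial>D) = (\<integral>z. 2 * (W_rho \<rho> z)^2 \<partial>D)" by simp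
    also have "\<dots> \<le> (\<integral>z. c * (W_rho \<rho> z - 1/2 * dis z) \<partial>D)"
    proof (rule integral_mono_AE)
      show "integrable D (\<lambda>z. 2 * (W_rho \<rho> z)^2)" using iW2 by simp
      show "integrable D (\<lambda>z. c * (W_rho \<rho> z - 1/2 * dis z))" by (rule i3)
      show "AE z in D. 2 * (W_rho \<rho> z)^2 \<le> c * (W_rho \<rho> z - 1/2 * dis z)"
      proof (rule AE_mp[OF D_labels], rule AE_I2)
        fix z assume z: "z \<in> space D"
        show "snd z \<in> {1..K} \<longrightarrow> 2 * (W_rho \<rho> z)^2 \<le> c * (W_rho \<rho> z - 1/2 * dis z)"
          using PW[OF z] by blast
      qed
    qed
    also have "\<dots> = c * ((\<integral>z. W_rho \<rho> z \<partial>D) - 1/2 * (\<integral>z. dis z \<partial>D))"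
      using iW idis by simp
    finally show ?thesis .
  qed
  show ?thesis
    unfolding E1 E2 c_def[symmetric]
    using I1 I2 I3 cc by simp
qed


end
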